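(* Assume $2\le|\mathcal U_{\mathcal E}|\le T$. With $\delta=1/T^2$ and $T_1\ge|\mathcal U_{\mathcal E}|$, the regret of UCB-TSN satisfies $\mathcal R_\nu(T,\pi)=\tilde O\big(\sqrt{|\mathcal U_{\mathcal E}|T}+T_1\big)$.
   Context: Bandit with network interference: arm set $\mathcal K=[K]$, units $\mathcal U=[N]$, horizon $T$, fixed adjacency matrix $\mathbb H$. Choosing a super arm $A\in\mathcal K^{\mathcal U}$ in round $t$ yields for each unit $i$ the reward $r_{i,t}(A)=Y_i(A)+\eta_{i,t}$ with unknown $Y_i(A)\in[0,1]$ and i.i.d. zero-mean 1-sub-Gaussian noise. A fixed exposure mapping $\mathbf S:\mathcal U\times\mathcal K^{\mathcal U}\times\{\mathbb H\}\to\mathcal U_s$ assigns to $A$ the exposure super arm $(\mathbf S(i,A,\mathbb H))_{i}$. With a fixed partition $\mathcal C$ of $[N]$ into clusters, $\mathcal U_{\mathcal C}$ = exposure vectors constant on clusters, $\mathcal U_{\mathcal O}$ = exposure vectors realized by some $A$, $\mathcal U_{\mathcal E}=\mathcal U_{\mathcal C}\cap\mathcal U_{\mathcal O}$. For $S\in\mathcal U_{\mathcal E}$, $\tilde Y_i(S)=\sum_AY_i(A)\mathbb P(A\mid S)$ with $\mathbb P(\cdot\mid S)$ uniform over super arms whose exposure super arm is $S$; the exposure reward $\tilde r_{i,t}(S)$ is the reward $r_{i,t}(A)$ of such a uniformly drawn $A$. Regret of a policy $\pi$ choosing $S_t\in\mathcal U_{\mathcal E}$: $\mathcal R_\nu(T,\pi)=\frac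 TN\sum_i\tilde Y_i(S^* )-\frac1N\mathbb E_\pi[\sum_{t\le T}\sum_i\tilde r_{i,t}(S_t)]$, $S^*\in\arg\max_{S\in\mathcal U_{\mathcal E}}\sum_i\tilde Y_i(S)$; $\nu$ denotes the instance (reward distributions). Algorithm UCB-TSN (parameters $T_1\le T$, $\delta$): Sampling$(S)$ draws $A$ uniformly among super arms with exposure super arm $S$, pulls it and records $\tilde r_{i,t}(S)=r_{i,t}(A)$. Let $\mathcal N^t_S$ be the number of rounds $t'\le t$ with $S_{t'}=S$ and $\hat R_t(S)$ the average of $\frac1N\sum_i\tilde r_{i,t'}(S_{t'})$ over those rounds. Phase 1 ($t\le T_1$): play the elements of $\mathcal U_{\mathcal E}$ in round-robin order via Sampling (and output ATE estimates $\hat R_{T_1}(S_i)-\hat R_{T_1}(S_j)$). Phase 2 ($T_1<t\le T$): play $S_t=\arg\max_S\big(\hat R_{t-1}(S)+\sqrt{9\log(1/\delta)/\mathcal N^{t-1}_S}\big)$ via Sampling. $\tilde O$ hides polylogarithmic factors; orders are in $K,T$. *)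

theory Defs
  imports "HOL-Probability.Probability"
begin

text \<open>The exposure mapping Smap gets a unit, a super arm and the
  adjacency matrix H and returns an exposure value of type 'e.\<close>

definition superarms :: "nat \<Rightarrow> nat \<Rightarrow> (nat \<Rightarrow> nat) set" where
  "superarms N K = {..<N} \<rightarrow>\<^sub>E {..<K}"

definition expo_arm ::
  "nat \<Rightarrow> (nat \<Rightarrow> (nat \<Rightarrow> nat) \<Rightarrow> 'h \<Rightarrow> 'e) \<Rightarrow> 'h \<Rightarrow> (nat \<Rightarrow> nat) \<Rightarrow> (nat \<Rightarrow> 'e)" where
  "expo_arm N Smap H A = (\<lambda>i\<in>{..<N}. Smap i A H)"

definition UO :: "nat \<Rightarrow> nat \<Rightarrow> (nat \<Rightarrow> (nat \<Rightarrow> nat) \<Rightarrow> 'h \<Rightarrow> 'e) \<Rightarrow> 'h \<Rightarrow> (nat \<Rightarrow> 'e) set" where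
  "UO N K Smap H = expo_arm N Smap H ` superarms N K"

definition UC :: "nat \<Rightarrow> nat set set \<Rightarrow> (nat \<Rightarrow> 'e) set" where
  "UC N Cl = {S \<in> {..<N} \<rightarrow>\<^sub>E UNIV. \<forall>c\<in>Cl. \<forall>i\<in>c. \<forall>j\<in>c. S i = S j}"

definition UE :: "nat \<Rightarrow> nat \<Rightarrow> (nat \<Rightarrow> (nat \<Rightarrow> nat) \<Rightarrow> 'h \<Rightarrow> 'e) \<Rightarrow> 'h \<Rightarrow> nat set set
    \<Rightarrow> (nat \<Rightarrow> 'e) set" where
  "UE N K Smap H Cl = UC N Cl \<inter> UO N K Smap H"

definition preimg :: "nat \<Rightarrow> nat \<Rightarrow> (nat \<Rightarrow> (nat \<Rightarrow> nat) \<Rightarrow> 'h \<Rightarrow> 'e) \<Rightarrow> 'h \<Rightarrow> (nat \<Rightarrow> 'e)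
    \<Rightarrow> (nat \<Rightarrow> nat) set" where
  "preimg N K Smap H S = {A \<in> superarms N K. expo_arm N Smap H A = S}"

text \<open>Exposure mean reward tilde Y_i(S) (uniform P(A | S))\<close>
definition Ytil :: "nat \<Rightarrow> nat \<Rightarrow> (nat \<Rightarrow> (nat \<Rightarrow> nat) \<Rightarrow> 'h \<Rightarrow> 'e) \<Rightarrow> 'h
    \<Rightarrow> (nat \<Rightarrow> (nat \<Rightarrow> nat) \<Rightarrow> real) \<Rightarrow> nat \<Rightarrow> (nat \<Rightarrow> 'e) \<Rightarrow> real" where
  "Ytil N K Smap H Y i S =
     (\<Sum>A\<in>preimg N K Smap H S. Y i A) / real (card (preimg N K Smap H S))"

definition mean_exposure_reward :: "nat \<Rightarrow> nat \<Rightarrow> (nat \<Rightarrow> (nat \<Rightarrow> nat) \<Rightarrow> 'h \<Rightarrow> 'e) \<Rightarrow> 'h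
    \<Rightarrow> (nat \<Rightarrow> (nat \<Rightarrow> nat) \<Rightarrow> real) \<Rightarrow> (nat \<Rightarrow> 'e) \<Rightarrow> real" where
  "mean_exposure_reward N K Smap H Y S = (\<Sum>i<N. Ytil N K Smap H Y i S) / real N"

text \<open>A history is the list of (played exposure super arm, observed average reward
  (1/N) sum_i tilde r_{i,t}(S_t)) of the past rounds.\<close>
type_synonym 'e history = "((nat \<Rightarrow> 'e) \<times> real) list"

definition n_pulls :: "'e history \<Rightarrow> (nat \<Rightarrow> 'e) \<Rightarrow> nat" where
  "n_pulls h S = length (filter (\<lambda>p. fst p = S) h)"

definition R_hat :: "'e history \<Rightarrow> (nat \<Rightarrow> 'e) \<Rightarrow> real" where
  "R_hat h S = sum_list (map snd (filter (\<lambda>p. fst p = S) h)) / real (n_pulls h S)"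

definition ucb_index :: "real \<Rightarrow> 'e history \<Rightarrow> (nat \<Rightarrow> 'e) \<Rightarrow> real" where
  "ucb_index \<delta> h S = R_hat h S + sqrt (9 * ln (1 / \<delta>) / real (n_pulls h S))"

text \<open>UCB-TSN decision rule. enum lists the elements of U_E (round-robin order of
  phase 1; ties of the argmax in phase 2 are broken by this order). The current
  round is t = length h + 1.\<close>
definition ucb_tsn :: "(nat \<Rightarrow> 'e) list \<Rightarrow> nat \<Rightarrow> real \<Rightarrow> 'e history \<Rightarrow> (nat \<Rightarrow> 'e)" where
  "ucb_tsn enum T1 \<delta> h =
     (let t = Suc (length h) in
      if t \<le> T1 then enum ! ((t - 1) mod length enum)
      else hd (filter (\<lambda>S. \<forall>S'\<in>set enum. ucb_index \<delta> h S' \<le> ucb_index \<delta> h S) enum))"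

text \<open>Expected total (unit-averaged) reward collected in the next m rounds by the
  deterministic history-dependent policy pol, starting from history h, when playing
  S means: draw A uniformly from pre S, each unit i receives Y i A + eta_i with
  eta_1..eta_N i.i.d. according to noise (fresh in each round).\<close>
primrec exp_reward :: "nat \<Rightarrow> (nat \<Rightarrow> (nat \<Rightarrow> nat) \<Rightarrow> real) \<Rightarrow> real measure
    \<Rightarrow> ((nat \<Rightarrow> 'e) \<Rightarrow> (nat \<Rightarrow> nat) set) \<Rightarrow> ('e history \<Rightarrow> (nat \<Rightarrow> 'e))
    \<Rightarrow> nat \<Rightarrow> 'e history \<Rightarrow> real" where
  "exp_reward N Y noise pre pol 0 h = 0"
| "exp_reward N Y noise pre pol (Suc m) h =
     (let S = pol h in
      (\<Sum>A\<in>pre S. \<integral>eta. (let r = (\<Sum>i<N. Y i A + eta i) / real N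
                            in r + exp_reward N Y noise pre pol m (h @ [(S, r)]))
                      \<partial>(PiM {..<N} (\<lambda>_. noise)))
      / real (card (pre S)))"

definition regret :: "nat \<Rightarrow> nat \<Rightarrow> (nat \<Rightarrow> (nat \<Rightarrow> nat) \<Rightarrow> 'h \<Rightarrow> 'e) \<Rightarrow> 'h \<Rightarrow> nat set set
    \<Rightarrow> (nat \<Rightarrow> (nat \<Rightarrow> nat) \<Rightarrow> real) \<Rightarrow> real measure \<Rightarrow> ('e history \<Rightarrow> (nat \<Rightarrow> 'e))
    \<Rightarrow> nat \<Rightarrow> real" where
  "regret N K Smap H Cl Y noise pol T =
     real T * Max (mean_exposure_reward N K Smap H Y ` UE N K Smap H Cl)
     - exp_reward N Y noise (preimg N K Smap H) pol T []"

definition subgaussian_noise :: "real measure \<Rightarrow> bool" where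
  "subgaussian_noise \<eta> \<longleftrightarrow> prob_space \<eta> \<and> sets \<eta> = sets borel \<and>
     integrable \<eta> (\<lambda>x. x) \<and> (\<integral>x. x \<partial>\<eta>) = 0 \<and>
     (\<forall>s::real. (\<integral>\<^sup>+x. ennreal (exp (s * x)) \<partial>\<eta>) \<le> ennreal (exp (s\<^sup>2 / 2)))"

end

theory Submission
  imports Defs
begin


definition hist :: "'s list \<Rightarrow> (nat \<Rightarrow> real) \<Rightarrow> ('s \<times> real) list" where
  "hist fs v = zip fs (map v [0..<length fs])"

definition vec :: "('s \<times> real) list \<Rightarrow> nat \<Rightarrow> real" where
  "vec h = (\<lambda>j. if j < length h then snd (h ! j) else 0)"

lemma hist_vec: "hist (map fst h) (vec h) = h"
  unfolding hist_def vec_def by (rule nth_equalityI) auto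

lemma length_hist[simp]: "length (hist fs v) = length fs" by (simp add: hist_def)

lemma hist_snoc: "hist fs v @ [(S, r)] = hist (fs @ [S]) (v(length fs := r))"
  unfolding hist_def by (rule nth_equalityI) (auto simp: nth_append)

definition Om :: "(nat \<Rightarrow> real) measure" where "Om = PiM UNIV (\<lambda>_. borel)"

lemma space_Om[simp]: "space Om = UNIV" by (simp add: Om_def space_PiM)

lemma Om_comp[measurable]: "(\<lambda>v. v i) \<in> borel_measurable Om"
  unfolding Om_def by measurable

lemma measurable_into_Om:
  assumes "\<And>i. (\<lambda>x. f x i) \<in> borel_measurable M" shows "f \<in> measurable M Om"
proof -
  have "(\<lambda>x i. f x i) \<in> measurable M (PiM UNIV (\<lambda>_. borel))"
    by (rule measurable_PiM_single') (auto simp: assms)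
  then show ?thesis by (simp add: Om_def)
qed

definition gm :: "(('s \<times> real) list \<Rightarrow> real) \<Rightarrow> bool" where
  "gm F \<longleftrightarrow> (\<forall>fs. (\<lambda>v. F (hist fs v)) \<in> borel_measurable Om)"

definition good :: "(('s \<times> real) list \<Rightarrow> real) \<Rightarrow> bool" where
  "good F \<longleftrightarrow> gm F \<and> (\<forall>n. \<exists>B. \<forall>h. length h = n \<longrightarrow> \<bar>F h\<bar> \<le> B)"

lemma upd_meas: "(\<lambda>r. (w::nat\<Rightarrow>real)(k := r)) \<in> measurable borel Om"
proof (rule measurable_into_Om)
  fix i show "(\<lambda>x. (w(k := x)) i) \<in> borel_measurable borel"
    by (cases "i = k") auto
qed

lemma gm_snoc: assumes "gm F" shows "(\<lambda>r. F (h @ [(S, r)])) \<in> borel_measurable borel"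
proof -
  have "(\<lambda>r. F (h @ [(S, r)])) = (\<lambda>v. F (hist (map fst h @ [S]) v)) o (\<lambda>r. (vec h)(length h := r))"
    using hist_snoc[of "map fst h" "vec h" S] by (auto simp: hist_vec)
  also have "\<dots> \<in> borel_measurable borel"
    by (rule measurable_comp[OF upd_meas]) (use assms in \<open>simp add: gm_def\<close>)
  finally show ?thesis .
qed

definition Enu :: "nat \<Rightarrow> (nat \<Rightarrow> (nat \<Rightarrow> nat) \<Rightarrow> real) \<Rightarrow> real measure \<Rightarrow> ('s \<Rightarrow> (nat \<Rightarrow> nat) set) \<Rightarrow> 's \<Rightarrow> (real \<Rightarrow> real) \<Rightarrow> real" where
  "Enu N Y noise pre S g = (\<Sum>A\<in>pre S. \<integral>eta. g ((\<Sum>i<N. Y i A + eta i) / real N) \<partial>(PiM {..<N} (\<lambda>_. noise))) / real (card (pre S))"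

primrec Eop :: "nat \<Rightarrow> (nat \<Rightarrow> (nat \<Rightarrow> nat) \<Rightarrow> real) \<Rightarrow> real measure \<Rightarrow> ('s \<Rightarrow> (nat \<Rightarrow> nat) set) \<Rightarrow> (('s \<times> real) list \<Rightarrow> 's) \<Rightarrow> nat \<Rightarrow> (('s \<times> real) list \<Rightarrow> real) \<Rightarrow> ('s \<times> real) list \<Rightarrow> real" where
  "Eop N Y noise pre pol 0 F h = F h"
| "Eop N Y noise pre pol (Suc m) F h = Enu N Y noise pre (pol h) (\<lambda>r. Eop N Y noise pre pol m F (h @ [(pol h, r)]))"

lemma exp_reward_Suc': "exp_reward N Y noise pre pol (Suc m) h = Enu N Y noise pre (pol h) (\<lambda>r. r + exp_reward N Y noise pre pol m (h @ [(pol h, r)]))"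
  by (simp add: Enu_def Let_def)

locale bandit =
  fixes N :: nat and Y :: "nat \<Rightarrow> (nat \<Rightarrow> nat) \<Rightarrow> real" and noise :: "real measure"
    and pre :: "(nat \<Rightarrow> 'e) \<Rightarrow> (nat \<Rightarrow> nat) set" and pol :: "((nat \<Rightarrow> 'e) \<times> real) list \<Rightarrow> (nat \<Rightarrow> 'e)" and U :: "(nat \<Rightarrow> 'e) set"
  assumes N1: "1 \<le> N" and sg: "subgaussian_noise noise" and finU: "finite U"
    and pre_fin: "\<And>S. S \<in> U \<Longrightarrow> finite (pre S)" and pre_ne: "\<And>S. S \<in> U \<Longrightarrow> pre S \<noteq> {}"
    and Ybd: "\<And>S A i. S \<in> U \<Longrightarrow> A \<in> pre S \<Longrightarrow> i < N \<Longrightarrow> 0 \<le> Y i A \<and> Y i A \<le> 1"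
    and polU: "\<And>h. pol h \<in> U"
    and polm: "\<And>fs S. {v \<in> space Om. pol (hist fs v) = S} \<in> sets Om"
begin

abbreviation "P \<equiv> PiM {..<N} (\<lambda>_. noise)"
definition rA :: "(nat \<Rightarrow> nat) \<Rightarrow> (nat \<Rightarrow> real) \<Rightarrow> real" where
  "rA A eta = (\<Sum>i<N. Y i A + eta i) / real N"
abbreviation "En \<equiv> Enu N Y noise pre"
abbreviation "E \<equiv> Eop N Y noise pre pol"

lemma noise_prob: "prob_space noise" and sets_noise: "sets noise = sets borel"
  using sg by (auto simp: subgaussian_noise_def)

lemma P_prob: "prob_space P"
  by (rule prob_space_PiM) (simp add: noise_prob)

interpretation Pp: prob_space P by (rule P_prob)

lemma sets_P: "sets P = sets (PiM {..<N} (\<lambda>_. borel))"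
  by (rule sets_PiM_cong) (auto simp: sets_noise)

lemma meas_P: "measurable P M = measurable (PiM {..<N} (\<lambda>_. borel)) M"
  by (rule measurable_cong_sets) (auto simp: sets_P)

lemma eta_meas[measurable]: "i < N \<Longrightarrow> (\<lambda>eta. eta i) \<in> borel_measurable P"
  unfolding meas_P by measurable

lemma rA_meas[measurable]: "rA A \<in> borel_measurable P"
  unfolding meas_P rA_def by measurable

lemma En_def2: "En S g = (\<Sum>A\<in>pre S. \<integral>eta. g (rA A eta) \<partial>P) / real (card (pre S))"
  by (simp add: Enu_def rA_def)

lemma int_g:
  fixes g :: "real \<Rightarrow> real"
  assumes "g \<in> borel_measurable borel" "\<And>r. \<bar>g r\<bar> \<le> B"
  shows "integrable P (\<lambda>eta. g (rA A eta))"
proof -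
  have "AE eta in P. norm (g (rA A eta)) \<le> B" using assms(2) by auto
  then show ?thesis by (rule Pp.integrable_const_bound) (use assms(1) in simp)
qed

lemma En_const: "S \<in> U \<Longrightarrow> En S (\<lambda>_. c) = c"
  using pre_fin[of S] pre_ne[of S] by (simp add: En_def2 Pp.prob_space)

lemma En_cmult: "En S (\<lambda>r. c * g r) = c * En S g"
  by (simp add: En_def2 sum_distrib_left)

lemma En_add:
  assumes "\<And>A. integrable P (\<lambda>eta. g1 (rA A eta))" "\<And>A. integrable P (\<lambda>eta. g2 (rA A eta))"
  shows "En S (\<lambda>r. g1 r + g2 r) = En S g1 + En S g2"
  using assms by (simp add: En_def2 sum.distrib add_divide_distrib)

lemma En_mono:
  assumes "\<And>A. integrable P (\<lambda>eta. g1 (rA A eta))" "\<And>A. integrable P (\<lambda>eta. g2 (rA A eta))"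
    and "\<And>r. g1 r \<le> g2 r"
  shows "En S g1 \<le> En S g2"
  unfolding En_def2
  by (intro divide_right_mono sum_mono integral_mono) (use assms in auto)

lemma En_bound:
  assumes "S \<in> U" "g \<in> borel_measurable borel" "\<And>r. \<bar>g r\<bar> \<le> B"
  shows "\<bar>En S g\<bar> \<le> B"
proof -
  have i: "integrable P (\<lambda>eta. g (rA A eta))" for A by (rule int_g) (use assms in auto)
  have b: "- B \<le> g r \<and> g r \<le> B" for r using assms(3)[of r] by linarith
  have "En S g \<le> En S (\<lambda>_. B)"
    by (rule En_mono) (use i b in auto)
  moreover have "En S (\<lambda>_. - B) \<le> En S g"
    by (rule En_mono) (use i b in auto)
  ultimately show ?thesis using En_const[OF assms(1)] by (simp add: abs_le_iff)
qed


lemma En_param_meas: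
  assumes G: "G \<in> borel_measurable Om"
  shows "(\<lambda>v. En S (\<lambda>r. G (v(k := r)))) \<in> borel_measurable Om"
proof -
  have inner: "(\<lambda>p. (fst p)(k := rA A (snd p))) \<in> measurable (Om \<Otimes>\<^sub>M P) Om" for A
  proof (rule measurable_into_Om)
    fix i show "(\<lambda>x. ((fst x)(k := rA A (snd x))) i) \<in> borel_measurable (Om \<Otimes>\<^sub>M P)"
      by (cases "i = k") auto
  qed
  have "(\<lambda>v. \<integral>eta. G (v(k := rA A eta)) \<partial>P) \<in> borel_measurable Om" for A
  proof (rule Pp.borel_measurable_lebesgue_integral)
    have "case_prod (\<lambda>v eta. G (v(k := rA A eta))) = G o (\<lambda>p. (fst p)(k := rA A (snd p)))"
      by (auto simp: fun_eq_iff)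
    also have "\<dots> \<in> borel_measurable (Om \<Otimes>\<^sub>M P)"
      by (rule measurable_comp[OF inner G])
    finally show "case_prod (\<lambda>v eta. G (v(k := rA A eta))) \<in> borel_measurable (Om \<Otimes>\<^sub>M P)" .
  qed
  then show ?thesis unfolding En_def2 by measurable
qed

lemma good_int:
  assumes "good F" shows "integrable P (\<lambda>eta. F (h @ [(S, rA A eta)]))"
proof -
  obtain B where B: "\<And>h'. length h' = Suc (length h) \<Longrightarrow> \<bar>F h'\<bar> \<le> B"
    using assms unfolding good_def by metis
  show ?thesis
    by (rule int_g[where g="\<lambda>r. F (h @ [(S, r)])" and B=B]) (use assms B gm_snoc in \<open>auto simp: good_def\<close>)
qed

lemma E_good: "good F \<Longrightarrow> good (E m F)"
proof (induction m)
  case 0 then show ?case by (simp add: fun_eq_iff[symmetric])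
next
  case (Suc m)
  have g: "good (E m F)" using Suc by simp
  have gm: "gm (E (Suc m) F)"
    unfolding gm_def
  proof
    fix fs
    have eq: "(\<lambda>v. E (Suc m) F (hist fs v)) = (\<lambda>v. \<Sum>S\<in>U. (if pol (hist fs v) = S then
        En S (\<lambda>r. E m F (hist (fs @ [S]) (v(length fs := r)))) else 0))"
    proof
      fix v
      have "(\<Sum>S\<in>U. (if pol (hist fs v) = S then
        En S (\<lambda>r. E m F (hist (fs @ [S]) (v(length fs := r)))) else 0))
        = En (pol (hist fs v)) (\<lambda>r. E m F (hist (fs @ [pol (hist fs v)]) (v(length fs := r))))"
        using finU polU by (simp add: sum.delta)
      then show "E (Suc m) F (hist fs v) = (\<Sum>S\<in>U. (if pol (hist fs v) = S then
        En S (\<lambda>r. E m F (hist (fs @ [S]) (v(length fs := r)))) else 0))"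
        by (simp add: hist_snoc)
    qed
    have "(\<lambda>v. E m F (hist (fs @ [S]) v)) \<in> borel_measurable Om" for S
      using g by (simp add: good_def gm_def)
    then have m: "(\<lambda>v. En S (\<lambda>r. E m F (hist (fs @ [S]) (v(length fs := r))))) \<in> borel_measurable Om" for S
      by (rule En_param_meas)
    show "(\<lambda>v. E (Suc m) F (hist fs v)) \<in> borel_measurable Om"
      unfolding eq
      by (intro borel_measurable_sum measurable_If m polm) auto
  qed
  have bd: "\<exists>B. \<forall>h. length h = n \<longrightarrow> \<bar>E (Suc m) F h\<bar> \<le> B" for n
  proof -
    obtain B where B: "\<And>h'. length h' = Suc n \<Longrightarrow> \<bar>E m F h'\<bar> \<le> B"
      using g unfolding good_def by metis
    have "\<bar>E (Suc m) F h\<bar> \<le> B" if "length h = n" for h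
      using that by (simp, intro En_bound polU gm_snoc) (use g B in \<open>auto simp: good_def\<close>)
    then show ?thesis by blast
  qed
  show ?case unfolding good_def using gm bd by blast
qed

lemma good_const: "good (\<lambda>_. c)"
  by (auto simp: good_def gm_def)

lemma good_add: "good F \<Longrightarrow> good G \<Longrightarrow> good (\<lambda>h. F h + G h)"
  unfolding good_def gm_def
proof (intro conjI allI; elim conjE)
  fix fs assume "\<forall>fs. (\<lambda>v. F (hist fs v)) \<in> borel_measurable Om" "\<forall>fs. (\<lambda>v. G (hist fs v)) \<in> borel_measurable Om"
  then show "(\<lambda>v. F (hist fs v) + G (hist fs v)) \<in> borel_measurable Om" by (intro borel_measurable_add) auto
next
  fix n assume a: "\<forall>n. \<exists>B. \<forall>h. length h = n \<longrightarrow> \<bar>F h\<bar> \<le> B" "\<forall>n. \<exists>B. \<forall>h. length h = n \<longrightarrow> \<bar>G h\<bar> \<le> B"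
  obtain B1 B2 where "\<forall>h. length h = n \<longrightarrow> \<bar>F h\<bar> \<le> B1" "\<forall>h. length h = n \<longrightarrow> \<bar>G h\<bar> \<le> B2"
    using a by metis
  then show "\<exists>B. \<forall>h. length h = n \<longrightarrow> \<bar>F h + G h\<bar> \<le> B"
    by (intro exI[of _ "B1 + B2"]) (auto intro: order.trans[OF abs_triangle_ineq] add_mono)
qed

lemma good_cmult: "good F \<Longrightarrow> good (\<lambda>h. c * F h)"
  unfolding good_def gm_def
proof (intro conjI allI; elim conjE)
  fix fs assume "\<forall>fs. (\<lambda>v. F (hist fs v)) \<in> borel_measurable Om"
  then show "(\<lambda>v. c * F (hist fs v)) \<in> borel_measurable Om" by (intro borel_measurable_times borel_measurable_const) auto
next
  fix n assume a: "\<forall>n. \<exists>B. \<forall>h. length h = n \<longrightarrow> \<bar>F h\<bar> \<le> B"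
  obtain B where "\<forall>h. length h = n \<longrightarrow> \<bar>F h\<bar> \<le> B"
    using a by metis
  then show "\<exists>B. \<forall>h. length h = n \<longrightarrow> \<bar>c * F h\<bar> \<le> B"
    by (intro exI[of _ "\<bar>c\<bar> * B"]) (auto simp: abs_mult intro: mult_left_mono)
qed

lemma good_sum: "finite I \<Longrightarrow> (\<And>i. i \<in> I \<Longrightarrow> good (F i)) \<Longrightarrow> good (\<lambda>h. \<Sum>i\<in>I. F i h)"
  by (induction I rule: finite_induct) (auto intro: good_add good_const)

lemma E_const: "E m (\<lambda>_. c) h = c"
  by (induction m arbitrary: h) (auto simp: En_const polU)

lemma E_cmult: "E m (\<lambda>h. c * F h) h = c * E m F h"
  by (induction m arbitrary: h) (auto simp: En_cmult[symmetric])

lemma E_add: "good F \<Longrightarrow> good G \<Longrightarrow> E m (\<lambda>h. F h + G h) h = E m F h + E m G h"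
proof (induction m arbitrary: h)
  case 0 then show ?case by simp
next
  case (Suc m)
  then show ?case
    by (simp, intro En_add good_int E_good)
qed

lemma E_sum: "finite I \<Longrightarrow> (\<And>i. i \<in> I \<Longrightarrow> good (F i)) \<Longrightarrow> E m (\<lambda>h. \<Sum>i\<in>I. F i h) h = (\<Sum>i\<in>I. E m (F i) h)"
proof (induction I rule: finite_induct)
  case empty then show ?case by (simp add: E_const)
next
  case (insert x I)
  then show ?case by (simp add: E_add good_sum)
qed

definition reach :: "((nat \<Rightarrow> 'e) \<times> real) list \<Rightarrow> ((nat \<Rightarrow> 'e) \<times> real) list \<Rightarrow> bool" where
  "reach h h' \<longleftrightarrow> (\<exists>ext. h' = h @ ext \<and> (\<forall>j<length ext. fst (ext ! j) = pol (h @ take j ext)))"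

lemma reach_snoc: "reach (h @ [(pol h, r)]) h' \<Longrightarrow> reach h h'"
  unfolding reach_def
proof (elim exE conjE)
  fix ext assume a: "h' = (h @ [(pol h, r)]) @ ext" "\<forall>j<length ext. fst (ext ! j) = pol ((h @ [(pol h, r)]) @ take j ext)"
  show "\<exists>ext. h' = h @ ext \<and> (\<forall>j<length ext. fst (ext ! j) = pol (h @ take j ext))"
  proof (intro exI[of _ "(pol h, r) # ext"] conjI allI impI)
    fix j assume "j < length ((pol h, r) # ext)"
    then show "fst (((pol h, r) # ext) ! j) = pol (h @ take j ((pol h, r) # ext))"
      using a(2) by (cases j) auto
  qed (use a in auto)
qed

lemma E_mono:
  assumes "good F" "good G" "\<And>h'. reach h h' \<Longrightarrow> length h' = length h + m \<Longrightarrow> F h' \<le> G h'"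
  shows "E m F h \<le> E m G h"
  using assms(3)
proof (induction m arbitrary: h)
  case 0
  then show ?case by (simp add: reach_def)
next
  case (Suc m)
  have i1: "integrable P (\<lambda>eta. E m F (h @ [(pol h, rA A eta)]))" for A
    by (intro good_int E_good assms(1))
  have i2: "integrable P (\<lambda>eta. E m G (h @ [(pol h, rA A eta)]))" for A
    by (intro good_int E_good assms(2))
  have le: "E m F (h @ [(pol h, r)]) \<le> E m G (h @ [(pol h, r)])" for r
  proof (rule Suc.IH)
    fix h' assume "reach (h @ [(pol h, r)]) h'" "length h' = length (h @ [(pol h, r)]) + m"
    then show "F h' \<le> G h'" using Suc.prems reach_snoc[of h r h'] by simp
  qed
  show ?case using En_mono[OF i1 i2 le] by simp
qed

end


context bandit begin
interpretation Pp: prob_space P by (rule P_prob)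

definition mu :: "(nat \<Rightarrow> 'e) \<Rightarrow> real" where
  "mu S = (if S \<in> U then (\<Sum>A\<in>pre S. (\<Sum>i<N. Y i A) / real N) / real (card (pre S)) else 0)"

lemma mu_bounds: "0 \<le> mu S \<and> mu S \<le> 1"
proof (cases "S \<in> U")
  case True
  have b: "0 \<le> (\<Sum>i<N. Y i A) / real N \<and> (\<Sum>i<N. Y i A) / real N \<le> 1" if "A \<in> pre S" for A
  proof -
    have "(\<Sum>i<N. Y i A) \<le> (\<Sum>i<N. 1)" by (rule sum_mono) (use Ybd[OF True that] in auto)
    moreover have "0 \<le> (\<Sum>i<N. Y i A)" by (rule sum_nonneg) (use Ybd[OF True that] in auto)
    ultimately show ?thesis using N1 by auto
  qed
  have "(\<Sum>A\<in>pre S. (\<Sum>i<N. Y i A) / real N) \<le> (\<Sum>A\<in>pre S. 1)" by (rule sum_mono) (use b in auto)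
  moreover have "0 \<le> (\<Sum>A\<in>pre S. (\<Sum>i<N. Y i A) / real N)" by (rule sum_nonneg) (use b in auto)
  ultimately show ?thesis using True pre_fin[OF True] pre_ne[OF True]
    by (auto simp: mu_def divide_le_eq card_gt_0_iff)
qed (simp add: mu_def)

lemma eta_int: assumes "i < N" shows "integrable P (\<lambda>eta. eta i)" "(\<integral>eta. eta i \<partial>P) = 0"
proof -
  have d: "distr P noise (\<lambda>\<omega>. \<omega> i) = noise"
    by (rule distr_PiM_component) (use assms noise_prob in auto)
  have m1: "(\<lambda>\<omega>. \<omega> i) \<in> measurable P noise"
    using assms by (intro measurable_component_singleton) auto
  have m2: "(\<lambda>x. x) \<in> borel_measurable noise"
    by (simp add: measurable_cong_sets[OF sets_noise refl])
  have "integrable noise (\<lambda>x. x)" "(\<integral>x. x \<partial>noise) = 0" using sg by (auto simp: subgaussian_noise_def)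
  then show "integrable P (\<lambda>eta. eta i)" "(\<integral>eta. eta i \<partial>P) = 0"
    using integrable_distr_eq[OF m1 m2] integral_distr[OF m1 m2] d by auto
qed

lemma rA_int: "integrable P (rA A)" and rA_integral: "(\<integral>eta. rA A eta \<partial>P) = (\<Sum>i<N. Y i A) / real N"
proof -
  have eq: "rA A = (\<lambda>eta. (\<Sum>i<N. Y i A) / real N + (\<Sum>i<N. eta i) / real N)"
    by (auto simp: rA_def sum.distrib add_divide_distrib fun_eq_iff)
  have i: "integrable P (\<lambda>eta. \<Sum>i<N. eta i)" using Bochner_Integration.integrable_sum[of "{..<N}" P "\<lambda>i eta. eta i"] eta_int(1) by auto
  show "integrable P (rA A)" unfolding eq using i by auto
  have "(\<integral>eta. (\<Sum>i<N. eta i) \<partial>P) = 0" using Bochner_Integration.integral_sum[of "{..<N}" P "\<lambda>i eta. eta i"] eta_int by auto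
  then show "(\<integral>eta. rA A eta \<partial>P) = (\<Sum>i<N. Y i A) / real N"
    unfolding eq using i by (simp add: Pp.prob_space)
qed

lemma En_id: "S \<in> U \<Longrightarrow> En S (\<lambda>r. r) = mu S"
  by (simp add: En_def2 rA_integral mu_def)


abbreviation "ER \<equiv> exp_reward N Y noise pre pol"

definition Rs :: "((nat \<Rightarrow> 'e) \<times> real) list \<Rightarrow> real" where
  "Rs h = (\<Sum>j<length h. mu (fst (h ! j)))"

lemma Rs_snoc: "Rs (h @ [(S, r)]) = Rs h + mu S"
  by (simp add: Rs_def nth_append)

lemma good_Rs: "good Rs"
  unfolding good_def gm_def
proof (intro conjI allI)
  fix fs :: "(nat \<Rightarrow> 'e) list"
  have "(\<lambda>v. Rs (hist fs v)) = (\<lambda>v. \<Sum>j<length fs. mu (fs ! j))"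
    by (auto simp: Rs_def hist_def)
  then show "(\<lambda>v. Rs (hist fs v)) \<in> borel_measurable Om" by simp
next
  fix n
  have "\<bar>Rs h\<bar> \<le> real n" if "length h = n" for h
  proof -
    have "0 \<le> Rs h" unfolding Rs_def by (rule sum_nonneg) (use mu_bounds in auto)
    moreover have "Rs h \<le> (\<Sum>j<length h. 1)" unfolding Rs_def by (rule sum_mono) (use mu_bounds in auto)
    ultimately show ?thesis using that by simp
  qed
  then show "\<exists>B. \<forall>h. length h = n \<longrightarrow> \<bar>Rs h\<bar> \<le> B" by blast
qed

lemma ER_E: "ER m h = E m Rs h - Rs h"
proof (induction m arbitrary: h)
  case 0 then show ?case by simp
next
  case (Suc m)
  define S where "S = pol h"
  have SU: "S \<in> U" by (simp add: S_def polU)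
  have i1: "integrable P (\<lambda>eta. E m Rs (h @ [(S, rA A eta)]))" for A
    by (intro good_int E_good good_Rs)
  have i2: "integrable P (\<lambda>eta. E m Rs (h @ [(S, rA A eta)]) + (- (Rs h + mu S)))" for A
    using i1 by auto
  have "ER (Suc m) h = En S (\<lambda>r. r + ER m (h @ [(S, r)]))"
    by (simp only: exp_reward_Suc' S_def)
  also have "\<dots> = En S (\<lambda>r. r + (E m Rs (h @ [(S, r)]) + (- (Rs h + mu S))))"
    by (rule arg_cong[where f="En S"]) (simp add: fun_eq_iff Suc.IH Rs_snoc)
  also have "\<dots> = En S (\<lambda>r. r) + En S (\<lambda>r. E m Rs (h @ [(S, r)]) + (- (Rs h + mu S)))"
    by (rule En_add) (use rA_int i2 in auto)
  also have "En S (\<lambda>r. E m Rs (h @ [(S, r)]) + (- (Rs h + mu S))) = En S (\<lambda>r. E m Rs (h @ [(S, r)])) + En S (\<lambda>r. - (Rs h + mu S))"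
    by (rule En_add) (use i1 in auto)
  finally show ?case using SU by (simp add: En_id En_const S_def)
qed

lemma regret_E: "ER m [] = E m Rs []"
  using ER_E[of m "[]"] by (simp add: Rs_def)

definition Yb :: "(nat \<Rightarrow> nat) \<Rightarrow> real" where "Yb A = (\<Sum>i<N. Y i A) / real N"
definition ebar :: "(nat \<Rightarrow> real) \<Rightarrow> real" where "ebar eta = (\<Sum>i<N. eta i) / real N"

lemma rA_split: "rA A eta = Yb A + ebar eta"
  by (simp add: rA_def Yb_def ebar_def sum.distrib add_divide_distrib)

lemma noise_mgf: "(\<integral>\<^sup>+eta. ennreal (exp (l * ebar eta)) \<partial>P) \<le> ennreal (exp (l^2 / 2))"
proof -
  interpret ps: product_sigma_finite "\<lambda>_::nat. noise"
    unfolding product_sigma_finite_def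
    using noise_prob prob_space_imp_sigma_finite by blast
  have sgb: "\<And>s. (\<integral>\<^sup>+x. ennreal (exp (s * x)) \<partial>noise) \<le> ennreal (exp (s^2/2))"
    using sg by (simp add: subgaussian_noise_def)
  have mf: "(\<lambda>x. ennreal (exp (l / real N * x))) \<in> borel_measurable noise"
    by (simp add: measurable_cong_sets[OF sets_noise refl])
  have eq: "ennreal (exp (l * ebar eta)) = (\<Prod>i<N. ennreal (exp (l / real N * eta i)))" for eta
  proof -
    have "l * ebar eta = (\<Sum>i<N. l / real N * eta i)"
      by (simp add: ebar_def sum_distrib_left sum_divide_distrib)
    then have "exp (l * ebar eta) = (\<Prod>i<N. exp (l / real N * eta i))" by (simp add: exp_sum)
    then show ?thesis by (simp add: prod_ennreal)
  qed
  have "(\<integral>\<^sup>+eta. ennreal (exp (l * ebar eta)) \<partial>P) = (\<Prod>i<N. \<integral>\<^sup>+x. ennreal (exp (l / real N * x)) \<partial>noise)"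
    unfolding eq by (rule ps.product_nn_integral_prod) (use mf in auto)
  also have "\<dots> \<le> (\<Prod>i<N. ennreal (exp ((l / real N)^2 / 2)))"
    by (rule prod_mono_ennreal) (rule sgb)
  also have "\<dots> = ennreal (exp ((l / real N)^2 / 2) ^ N)"
    by (simp add: ennreal_power)
  also have "exp ((l / real N)^2 / 2) ^ N = exp (real N * ((l / real N)^2 / 2))"
    by (subst exp_of_nat_mult) simp
  also have "real N * ((l / real N)^2 / 2) = l^2 / (2 * real N)"
    using N1 by (simp add: power2_eq_square field_simps)
  also have "l^2 / (2 * real N) \<le> l^2 / 2"
    using N1 by (intro divide_left_mono) auto
  finally show ?thesis by (simp add: ennreal_leI)
qed


lemma Yb_bounds: "S \<in> U \<Longrightarrow> A \<in> pre S \<Longrightarrow> 0 \<le> Yb A \<and> Yb A \<le> 1"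
proof -
  assume a: "S \<in> U" "A \<in> pre S"
  have "(\<Sum>i<N. Y i A) \<le> (\<Sum>i<N. 1)" by (rule sum_mono) (use Ybd[OF a] in auto)
  moreover have "0 \<le> (\<Sum>i<N. Y i A)" by (rule sum_nonneg) (use Ybd[OF a] in auto)
  ultimately show ?thesis using N1 by (auto simp: Yb_def)
qed

lemma hoeff_gen:
  assumes S: "S \<in> U" and f: "\<And>A. A \<in> pre S \<Longrightarrow> a \<le> f A \<and> f A \<le> b" and l: "l > 0"
  shows "(\<Sum>A\<in>pre S. exp (l * (f A - (\<Sum>A\<in>pre S. f A) / real (card (pre S))))) / real (card (pre S))
          \<le> exp (l^2 * (b - a)^2 / 8)"
proof -
  define p where "p = pmf_of_set (pre S)"
  have fin: "finite (pre S)" and ne: "pre S \<noteq> {}" using pre_fin[OF S] pre_ne[OF S] by auto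
  have sp: "set_pmf p = pre S" using fin ne by (simp add: p_def)
  interpret ib: interval_bounded_random_variable "measure_pmf p" f a b
  proof unfold_locales
    show "f \<in> borel_measurable (measure_pmf p)" by simp
    show "AE x in measure_pmf p. f x \<in> {a..b}" using f by (simp add: AE_measure_pmf_iff sp)
  qed
  have ex: "measure_pmf.expectation p f = (\<Sum>A\<in>pre S. f A) / real (card (pre S))"
    unfolding p_def using fin ne by (simp add: integral_pmf_of_set)
  have h: "(\<integral>\<^sup>+x. ennreal (exp (l * (f x - measure_pmf.expectation p f))) \<partial>measure_pmf p) \<le> ennreal (exp (l^2 * (b - a)^2 / 8))"
    by (rule ib.Hoeffdings_lemma_nn_integral[OF l])
  have "(\<integral>\<^sup>+x. ennreal (exp (l * (f x - measure_pmf.expectation p f))) \<partial>measure_pmf p)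
      = ennreal (measure_pmf.expectation p (\<lambda>x. exp (l * (f x - measure_pmf.expectation p f))))"
    by (rule nn_integral_eq_integral) (auto intro!: integrable_measure_pmf_finite simp: sp fin)
  also have "measure_pmf.expectation p (\<lambda>x. exp (l * (f x - measure_pmf.expectation p f)))
     = (\<Sum>A\<in>pre S. exp (l * (f A - (\<Sum>A\<in>pre S. f A) / real (card (pre S))))) / real (card (pre S))"
    unfolding ex unfolding p_def using fin ne by (simp add: integral_pmf_of_set)
  finally show ?thesis using h by (simp add: ennreal_le_iff)
qed

lemma mu_Yb: "S \<in> U \<Longrightarrow> mu S = (\<Sum>A\<in>pre S. Yb A) / real (card (pre S))"
  by (simp add: mu_def Yb_def)

lemma hoeff: assumes S: "S \<in> U"
  shows "(\<Sum>A\<in>pre S. exp (l * (Yb A - mu S))) / real (card (pre S)) \<le> exp (l^2 / 8)"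
proof (cases "l = 0")
  case True then show ?thesis using pre_fin[OF S] pre_ne[OF S] by simp
next
  case False
  show ?thesis
  proof (cases "l > 0")
    case True
    show ?thesis using hoeff_gen[where f=Yb and a=0 and b=1, OF S _ True] Yb_bounds[OF S] by (simp add: mu_Yb[OF S])
  next
    case False2: False
    then have "-l > 0" using False by simp
    from hoeff_gen[where f="\<lambda>A. - Yb A" and a="-1" and b=0, OF S _ this] Yb_bounds[OF S]
    have "(\<Sum>A\<in>pre S. exp (- l * (- Yb A - (\<Sum>A\<in>pre S. - Yb A) / real (card (pre S))))) / real (card (pre S))
          \<le> exp ((- l)^2 * (0 - - 1)^2 / 8)" by auto
    then show ?thesis by (simp add: mu_Yb[OF S] sum_negf algebra_simps)
  qed
qed

lemma mgf:
  assumes S: "S \<in> U" and a: "0 \<le> a" and c: "0 \<le> c"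
  shows "En S (\<lambda>r. min c (a * exp (l * (r - mu S)))) \<le> a * exp (l^2 * 5 / 8)"
proof -
  define g where "g = (\<lambda>r. min c (a * exp (l * (r - mu S))))"
  have gm: "g \<in> borel_measurable borel" unfolding g_def by measurable
  have gb: "\<bar>g r\<bar> \<le> c" for r using a c by (simp add: g_def)
  have per: "(\<integral>eta. g (rA A eta) \<partial>P) \<le> a * exp (l * (Yb A - mu S)) * exp (l^2 / 2)" for A
  proof -
    define K where "K = a * exp (l * (Yb A - mu S))"
    have K0: "0 \<le> K" using a by (simp add: K_def)
    have int: "integrable P (\<lambda>eta. g (rA A eta))" by (rule int_g[OF gm gb])
    have gle: "g (rA A eta) \<le> K * exp (l * ebar eta)" for eta
    proof -
      have "g (rA A eta) \<le> a * exp (l * (rA A eta - mu S))" by (simp add: g_def)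
      also have "\<dots> = K * exp (l * ebar eta)"
        by (simp add: K_def rA_split algebra_simps exp_add[symmetric])
      finally show ?thesis .
    qed
    have em: "(\<lambda>eta. ebar eta) \<in> borel_measurable P" unfolding ebar_def meas_P by measurable
    have "ennreal (\<integral>eta. g (rA A eta) \<partial>P) = (\<integral>\<^sup>+eta. ennreal (g (rA A eta)) \<partial>P)"
      by (rule nn_integral_eq_integral[symmetric]) (use int a c in \<open>auto simp: g_def\<close>)
    also have "\<dots> \<le> (\<integral>\<^sup>+eta. ennreal K * ennreal (exp (l * ebar eta)) \<partial>P)"
      by (rule nn_integral_mono) (use gle K0 in \<open>auto simp: ennreal_mult'[symmetric] intro!: ennreal_leI\<close>)
    also have "\<dots> = ennreal K * (\<integral>\<^sup>+eta. ennreal (exp (l * ebar eta)) \<partial>P)"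
      by (rule nn_integral_cmult) (use em in measurable)
    also have "\<dots> \<le> ennreal K * ennreal (exp (l^2 / 2))"
      by (rule mult_left_mono[OF noise_mgf]) simp
    also have "\<dots> = ennreal (K * exp (l^2 / 2))" using K0 by (simp add: ennreal_mult)
    finally show ?thesis unfolding K_def by (simp add: ennreal_le_iff K0[unfolded K_def])
  qed
  have "En S g = (\<Sum>A\<in>pre S. \<integral>eta. g (rA A eta) \<partial>P) / real (card (pre S))" by (simp add: En_def2)
  also have "\<dots> \<le> (\<Sum>A\<in>pre S. a * exp (l * (Yb A - mu S)) * exp (l^2 / 2)) / real (card (pre S))"
    by (intro divide_right_mono sum_mono per) auto
  also have "\<dots> = a * exp (l^2 / 2) * ((\<Sum>A\<in>pre S. exp (l * (Yb A - mu S))) / real (card (pre S)))"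
    by (simp add: sum_distrib_left[symmetric] sum_distrib_right[symmetric] algebra_simps)
  also have "\<dots> \<le> a * exp (l^2 / 2) * exp (l^2 / 8)"
    by (rule mult_left_mono[OF hoeff[OF S]]) (use a in simp)
  also have "\<dots> = a * exp (l^2 * 5 / 8)" by (simp add: mult.assoc exp_add[symmetric])
  finally show ?thesis by (simp add: g_def)
qed

end


lemma n_pulls_snoc: "n_pulls (h @ [(S', r)]) S = n_pulls h S + (if S' = S then 1 else 0)"
  by (simp add: n_pulls_def)

lemma n_pulls_fst: "n_pulls h S = length (filter (\<lambda>x. x = S) (map fst h))"
  by (simp add: n_pulls_def filter_map o_def)

lemma map_fst_hist[simp]: "map fst (hist fs v) = fs"
  by (simp add: hist_def)

lemma take_hist: "take j (hist fs v) = hist (take j fs) v"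
  unfolding hist_def by (simp add: take_zip take_map min_def)

lemma nth_hist: "j < length fs \<Longrightarrow> hist fs v ! j = (fs ! j, v j)"
  by (simp add: hist_def)

lemma sum_list_filter_nth:
  "sum_list (map snd (filter (\<lambda>p. fst p = S) h)) = (\<Sum>j<length h. if fst (h ! j) = S then snd (h ! j) else 0)"
  by (subst sum_list_map_filter', subst sum_list_sum_nth) (simp add: atLeast0LessThan)

lemma n_pulls_sum: "real (n_pulls h S) = (\<Sum>j<length h. if fst (h ! j) = S then 1 else 0)"
proof -
  have "(\<Sum>j<length h. if fst (h ! j) = S then 1 else (0::real)) = real (card {j \<in> {..<length h}. fst (h ! j) = S})"
    by (simp add: sum.inter_filter[symmetric])
  also have "{j \<in> {..<length h}. fst (h ! j) = S} = {j. j < length h \<and> fst (h ! j) = S}" by auto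
  finally show ?thesis by (simp add: n_pulls_def length_filter_conv_card)
qed

context bandit begin

definition ssum :: "(nat \<Rightarrow> 'e) \<Rightarrow> nat \<Rightarrow> ((nat \<Rightarrow> 'e) \<times> real) list \<Rightarrow> real" where
  "ssum S n h = (\<Sum>j<length h. if fst (h ! j) = S \<and> n_pulls (take j h) S < n then snd (h ! j) - mu S else 0)"

definition Mg :: "(nat \<Rightarrow> 'e) \<Rightarrow> nat \<Rightarrow> real \<Rightarrow> ((nat \<Rightarrow> 'e) \<times> real) list \<Rightarrow> real" where
  "Mg S n l h = exp (l * ssum S n h - l^2 * (5/8) * real (min n (n_pulls h S)))"

lemma ssum_snoc: "ssum S n (h @ [(S', r)]) = ssum S n h + (if S' = S \<and> n_pulls h S < n then r - mu S else 0)"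
proof -
  have "(\<Sum>j<length h. if fst ((h @ [(S', r)]) ! j) = S \<and> n_pulls (take j (h @ [(S', r)])) S < n then snd ((h @ [(S', r)]) ! j) - mu S else 0)
      = (\<Sum>j<length h. if fst (h ! j) = S \<and> n_pulls (take j h) S < n then snd (h ! j) - mu S else 0)"
    by (rule sum.cong) (auto simp: nth_append)
  then show ?thesis unfolding ssum_def by simp
qed

lemma Mg_snoc: "Mg S n l (h @ [(S', r)]) =
   (if S' = S \<and> n_pulls h S < n then Mg S n l h * exp (l * (r - mu S) - l^2 * (5/8)) else Mg S n l h)"
proof (cases "S' = S \<and> n_pulls h S < n")
  case True
  then have "real (min n (n_pulls (h @ [(S', r)]) S)) = real (min n (n_pulls h S)) + 1"
    by (auto simp: n_pulls_snoc)
  then show ?thesis using True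
    by (simp add: Mg_def ssum_snoc exp_add[symmetric] algebra_simps)
next
  case False
  then have "min n (n_pulls (h @ [(S', r)]) S) = min n (n_pulls h S)"
    by (auto simp: n_pulls_snoc)
  moreover have "ssum S n (h @ [(S', r)]) = ssum S n h"
    using False by (auto simp: ssum_snoc)
  ultimately show ?thesis using False unfolding Mg_def by auto
qed

lemma Mg_nil: "Mg S n l [] = 1"
  by (simp add: Mg_def ssum_def n_pulls_def)

lemma good_minMg: assumes c: "0 \<le> c" shows "good (\<lambda>h. min c (Mg S n l h))"
  unfolding good_def gm_def
proof (intro conjI allI)
  fix fs :: "(nat \<Rightarrow> 'e) list"
  have eq: "(\<lambda>v. min c (Mg S n l (hist fs v))) = (\<lambda>v. min c (exp (l * (\<Sum>j<length fs.
      if fs ! j = S \<and> n_pulls (hist (take j fs) v) S < n then v j - mu S else 0)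
      - l^2 * (5/8) * real (min n (length (filter (\<lambda>x. x = S) fs))))))"
    by (auto simp: Mg_def ssum_def nth_hist take_hist n_pulls_fst intro!: ext arg_cong[where f="\<lambda>x. min c (exp x)"] sum.cong)
  have eq2: "n_pulls (hist (take j fs) v) S = length (filter (\<lambda>x. x = S) (take j fs))" for j v
    by (simp add: n_pulls_fst)
  show "(\<lambda>v. min c (Mg S n l (hist fs v))) \<in> borel_measurable Om"
    unfolding eq eq2 by measurable
next
  fix k
  have "\<bar>min c (Mg S n l h)\<bar> \<le> c" for h using c by (simp add: Mg_def)
  then show "\<exists>B. \<forall>h. length h = k \<longrightarrow> \<bar>min c (Mg S n l h)\<bar> \<le> B" by blast
qed

lemma supermart:
  assumes S: "S \<in> U" and c: "0 \<le> c"
  shows "E m (\<lambda>h. min c (Mg S n l h)) h \<le> Mg S n l h"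
proof (induction m arbitrary: h)
  case 0 then show ?case by simp
next
  case (Suc m)
  define G where "G = (\<lambda>h. min c (Mg S n l h))"
  have gG: "good G" unfolding G_def by (rule good_minMg[OF c])
  define S' where "S' = pol h"
  have S'U: "S' \<in> U" by (simp add: S'_def polU)
  have le_c: "E m G h' \<le> c" for h'
  proof -
    have "E m G h' \<le> E m (\<lambda>_. c) h'"
      by (rule E_mono[OF gG good_const]) (simp add: G_def)
    then show ?thesis by (simp add: E_const)
  qed
  have "E (Suc m) G h = En S' (\<lambda>r. E m G (h @ [(S', r)]))" by (simp add: S'_def)
  also have "\<dots> \<le> En S' (\<lambda>r. G (h @ [(S', r)]))"
  proof (rule En_mono)
    show "integrable P (\<lambda>eta. E m G (h @ [(S', rA A eta)]))" for A by (intro good_int E_good gG)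
    show "integrable P (\<lambda>eta. G (h @ [(S', rA A eta)]))" for A by (intro good_int gG)
    show "E m G (h @ [(S', r)]) \<le> G (h @ [(S', r)])" for r
      using Suc.IH[of "h @ [(S', r)]"] le_c[of "h @ [(S', r)]"] unfolding G_def by simp
  qed
  also have "\<dots> \<le> Mg S n l h"
  proof (cases "S' = S \<and> n_pulls h S < n")
    case True
    define a where "a = Mg S n l h * exp (- (l^2 * (5/8)))"
    have a0: "0 \<le> a" by (simp add: a_def Mg_def)
    have ee: "exp (x - q) = exp (- q) * exp x" for x q :: real by (simp add: exp_add[symmetric])
    have "G (h @ [(S', r)]) = min c (a * exp (l * (r - mu S)))" for r
      using True by (simp add: G_def Mg_snoc a_def ee mult.assoc)
    then have "En S' (\<lambda>r. G (h @ [(S', r)])) = En S (\<lambda>r. min c (a * exp (l * (r - mu S))))"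
      using True by simp
    also have "\<dots> \<le> a * exp (l^2 * 5 / 8)" by (rule mgf[OF S a0 c])
    also have "\<dots> = Mg S n l h" by (simp add: a_def mult.assoc exp_add[symmetric])
    finally show ?thesis .
  next
    case False
    then have "G (h @ [(S', r)]) = min c (Mg S n l h)" for r
      by (auto simp: G_def Mg_snoc)
    then have "En S' (\<lambda>r. G (h @ [(S', r)])) = min c (Mg S n l h)"
      by (simp add: En_const[OF S'U])
    then show ?thesis by simp
  qed
  finally show ?case by (simp add: G_def)
qed

end


lemma ex_max_list: "xs \<noteq> [] \<Longrightarrow> \<exists>x\<in>set xs. \<forall>y\<in>set xs. f y \<le> (f x :: real)"
proof -
  assume "xs \<noteq> []"
  then have "finite (f ` set xs)" "f ` set xs \<noteq> {}" by auto
  then have "Max (f ` set xs) \<in> f ` set xs" by (rule Max_in)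
  then obtain x where x: "x \<in> set xs" "f x = Max (f ` set xs)" by auto
  have "\<forall>y\<in>set xs. f y \<le> f x"
  proof
    fix y assume "y \<in> set xs"
    then show "f y \<le> f x" unfolding x(2) using \<open>finite (f ` set xs)\<close> by (intro Max_ge) auto
  qed
  then show ?thesis using x(1) by blast
qed

lemma ucb_phase2:
  assumes "enum \<noteq> []" "\<not> Suc (length h) \<le> T1"
  shows "ucb_tsn enum T1 \<delta> h \<in> set enum \<and> (\<forall>S'\<in>set enum. ucb_index \<delta> h S' \<le> ucb_index \<delta> h (ucb_tsn enum T1 \<delta> h))"
proof -
  let ?Q = "\<lambda>S. \<forall>S'\<in>set enum. ucb_index \<delta> h S' \<le> ucb_index \<delta> h S"
  obtain x where "x \<in> set enum" "?Q x" using ex_max_list[OF assms(1), of "ucb_index \<delta> h"] by blast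
  then have ne: "filter ?Q enum \<noteq> []" by (auto simp: filter_empty_conv)
  have "hd (filter ?Q enum) \<in> set (filter ?Q enum)" by (rule hd_in_set[OF ne])
  then show ?thesis using assms(2) by (simp add: ucb_tsn_def Let_def)
qed

lemma ucb_phase1:
  "Suc (length h) \<le> T1 \<Longrightarrow> ucb_tsn enum T1 \<delta> h = enum ! (length h mod length enum)"
  by (simp add: ucb_tsn_def Let_def)

lemma ucb_in: "enum \<noteq> [] \<Longrightarrow> ucb_tsn enum T1 \<delta> h \<in> set enum"
  by (cases "Suc (length h) \<le> T1") (auto simp: ucb_phase1 ucb_phase2)

lemma ui_hist: "ucb_index \<delta> (hist fs v) S' =
   (\<Sum>j<length fs. if fs ! j = S' then v j else 0) / real (length (filter (\<lambda>x. x = S') fs))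
   + sqrt (9 * ln (1 / \<delta>) / real (length (filter (\<lambda>x. x = S') fs)))"
proof -
  have "sum_list (map snd (filter (\<lambda>p. fst p = S') (hist fs v))) = (\<Sum>j<length fs. if fs ! j = S' then v j else 0)"
    unfolding sum_list_filter_nth by (rule sum.cong) (auto simp: nth_hist)
  then show ?thesis
    by (simp add: ucb_index_def R_hat_def n_pulls_fst[of "hist fs v"])
qed

lemma ui_meas: "(\<lambda>v. ucb_index \<delta> (hist fs v) S') \<in> borel_measurable Om"
proof -
  have "(\<lambda>v. if fs ! j = S' then v j else 0) \<in> borel_measurable Om" for j
    by (cases "fs ! j = S'") simp_all
  then have "(\<lambda>v. \<Sum>j<length fs. if fs ! j = S' then v j else 0) \<in> borel_measurable Om"
    by (rule borel_measurable_sum)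
  then show ?thesis unfolding ui_hist
    by (intro borel_measurable_add borel_measurable_divide borel_measurable_const)
qed

lemma sets_hd_filter:
  assumes "\<And>x. x \<in> set xs \<Longrightarrow> {v \<in> space M. Q x v} \<in> sets M"
  shows "{v \<in> space M. hd (filter (\<lambda>x. Q x v) xs) = S} \<in> sets M"
  using assms
proof (induction xs)
  case Nil
  then show ?case by (cases "hd [] = S") auto
next
  case (Cons a xs)
  have eq: "{v \<in> space M. hd (filter (\<lambda>x. Q x v) (a # xs)) = S} =
     ({v \<in> space M. Q a v} \<inter> {v \<in> space M. a = S}) \<union> ((space M - {v \<in> space M. Q a v}) \<inter> {v \<in> space M. hd (filter (\<lambda>x. Q x v) xs) = S})"
    by auto
  have c: "{v \<in> space M. a = S} \<in> sets M" by (cases "a = S") auto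
  have a: "{v \<in> space M. Q a v} \<in> sets M" using Cons.prems by simp
  have b: "{v \<in> space M. hd (filter (\<lambda>x. Q x v) xs) = S} \<in> sets M"
    by (rule Cons.IH) (use Cons.prems in simp)
  show ?case unfolding eq
    by (intro sets.Un sets.Int sets.Diff a b c sets.top)
qed

lemma polm_ucb: "{v \<in> space Om. ucb_tsn enum T1 \<delta> (hist fs v) = S} \<in> sets Om"
proof (cases "Suc (length fs) \<le> T1")
  case True
  then have "{v \<in> space Om. ucb_tsn enum T1 \<delta> (hist fs v) = S} = {v \<in> space Om. enum ! (length fs mod length enum) = S}"
    by (simp add: ucb_phase1)
  moreover have "{v \<in> space Om. enum ! (length fs mod length enum) = S} \<in> sets Om"
    by (cases "enum ! (length fs mod length enum) = S") (simp_all add: sets.top[of Om, unfolded space_Om])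
  ultimately show ?thesis by simp
next
  case False
  have q: "{v \<in> space Om. \<forall>S'\<in>set enum. ucb_index \<delta> (hist fs v) S' \<le> ucb_index \<delta> (hist fs v) x} \<in> sets Om" for x
    by (rule sets.sets_Collect_finite_All) (rule borel_measurable_le[OF ui_meas ui_meas], simp)
  have "{v \<in> space Om. ucb_tsn enum T1 \<delta> (hist fs v) = S} =
      {v \<in> space Om. hd (filter (\<lambda>x. \<forall>S'\<in>set enum. ucb_index \<delta> (hist fs v) S' \<le> ucb_index \<delta> (hist fs v) x) enum) = S}"
    using False by (simp add: ucb_tsn_def Let_def)
  then show ?thesis using sets_hd_filter[OF q] by simp
qed



definition sumS :: "((nat \<Rightarrow> 'e) \<times> real) list \<Rightarrow> (nat \<Rightarrow> 'e) \<Rightarrow> real" where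
  "sumS h S = sum_list (map snd (filter (\<lambda>p. fst p = S) h))"

lemma sumS_snoc: "sumS (h @ [(S', r)]) S = sumS h S + (if S' = S then r else 0)"
  by (simp add: sumS_def)

lemma n_pulls_append: "n_pulls (a @ b) S = n_pulls a S + n_pulls b S"
  by (simp add: n_pulls_def)

lemma n_pulls_le: "n_pulls h S \<le> length h"
  by (simp add: n_pulls_def)

context bandit begin

lemma ssum_full: "n_pulls h S \<le> n \<Longrightarrow> ssum S n h = sumS h S - real (n_pulls h S) * mu S"
proof (induction h arbitrary: n rule: rev_induct)
  case Nil then show ?case by (simp add: ssum_def sumS_def n_pulls_def)
next
  case (snoc x h)
  obtain S' r where x: "x = (S', r)" by (cases x)
  have le: "n_pulls h S \<le> n" using snoc.prems by (simp add: x n_pulls_snoc)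
  have lt: "S' = S \<Longrightarrow> n_pulls h S < n" using snoc.prems by (simp add: x n_pulls_snoc)
  show ?case using snoc.IH[OF le] lt
    by (cases "S' = S") (auto simp: x ssum_snoc sumS_snoc n_pulls_snoc algebra_simps)
qed

lemma ssum_prefix: "n \<le> n_pulls h' S \<Longrightarrow> ssum S n (h' @ rest) = ssum S n h'"
proof (induction rest rule: rev_induct)
  case Nil then show ?case by simp
next
  case (snoc x rest)
  obtain S' r where x: "x = (S', r)" by (cases x)
  have "n \<le> n_pulls (h' @ rest) S" using snoc.prems by (simp add: n_pulls_append)
  then show ?case using snoc by (simp add: x ssum_snoc[of S n "h' @ rest", simplified])
qed

end

locale ucbloc = bandit N Y noise pre "ucb_tsn enum T1 (1 / (real T)^2)" "set enum"
  for N Y noise pre and enum :: "(nat \<Rightarrow> 'e) list" and T1 T :: nat +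
  assumes dist: "distinct enum" and len2: "2 \<le> length enum" and lenT1: "length enum \<le> T1"
    and T1T: "T1 \<le> T"
begin

abbreviation "pl \<equiv> ucb_tsn enum T1 (1 / (real T)^2)"

definition "L = ln ((real T)^2)"
definition "w n = sqrt (9 * L / real n)"
definition "cc = exp (18 * L / 5)"
definition "lam n = 4 * w n / 5"
definition "mstar = Max (mu ` set enum)"
definition "Pot h = (\<Sum>S\<in>set enum. 4 * sqrt (9 * L) * sqrt (real (n_pulls h S)))"
definition "Bf h = (\<Sum>S\<in>set enum. \<Sum>n\<in>{1..T}. (min cc (Mg S n (lam n) h) + min cc (Mg S n (- lam n) h)) / cc)"

lemma T2: "2 \<le> T" using len2 lenT1 T1T by simp
lemma L_pos: "0 < L" using T2 by (simp add: L_def)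
lemma cc_pos: "0 < cc" by (simp add: cc_def)
lemma enum_ne: "enum \<noteq> []" using len2 by auto

lemma ui_eq: "ucb_index (1 / (real T)^2) h S = R_hat h S + w (n_pulls h S)"
  by (simp add: ucb_index_def w_def L_def)

lemma R_hat_eq: "R_hat h S = sumS h S / real (n_pulls h S)"
  by (simp add: R_hat_def sumS_def n_pulls_def)

lemma w_sq: "1 \<le> n \<Longrightarrow> real n * (w n)^2 = 9 * L"
proof -
  assume "1 \<le> n"
  have "0 \<le> 9 * L / real n" by (intro divide_nonneg_nonneg) (use L_pos in auto)
  then have "(w n)^2 = 9 * L / real n" unfolding w_def by (rule real_sqrt_pow2)
  then show ?thesis using \<open>1 \<le> n\<close> by simp
qed

lemma w_nonneg: "0 \<le> w n"
proof -
  have "0 \<le> 9 * L / real n" by (intro divide_nonneg_nonneg) (use L_pos in auto)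
  then show ?thesis by (simp add: w_def)
qed

lemma Bf_nonneg: "0 \<le> Bf h"
  unfolding Bf_def using cc_pos
  by (intro sum_nonneg divide_nonneg_pos add_nonneg_nonneg) (auto simp: Mg_def)

lemma term_le_Bf:
  assumes "S \<in> set enum" "n \<in> {1..T}"
  shows "(min cc (Mg S n (lam n) h) + min cc (Mg S n (- lam n) h)) / cc \<le> Bf h"
proof -
  have nn: "0 \<le> (min cc (Mg S' n' (lam n') h) + min cc (Mg S' n' (- lam n') h)) / cc" for S' n'
    using cc_pos by (intro divide_nonneg_pos add_nonneg_nonneg) (auto simp: Mg_def)
  have "(min cc (Mg S n (lam n) h) + min cc (Mg S n (- lam n) h)) / cc
      \<le> (\<Sum>n\<in>{1..T}. (min cc (Mg S n (lam n) h) + min cc (Mg S n (- lam n) h)) / cc)"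
    by (rule member_le_sum) (use assms nn in auto)
  also have "\<dots> \<le> Bf h" unfolding Bf_def
    by (rule member_le_sum[where f="\<lambda>S. \<Sum>n\<in>{1..T}. (min cc (Mg S n (lam n) h) + min cc (Mg S n (- lam n) h)) / cc"])
       (use assms nn in \<open>auto intro: sum_nonneg\<close>)
  finally show ?thesis .
qed

lemma dev_B:
  assumes S: "S \<in> set enum" and n1: "1 \<le> n" and nT: "n \<le> T" and n: "n = n_pulls h' S"
    and dev: "R_hat h' S > mu S + w n \<or> R_hat h' S < mu S - w n"
  shows "1 \<le> Bf (h' @ rest)"
proof -
  define h where "h = h' @ rest"
  define X where "X = sumS h' S - real n * mu S"
  have ss: "ssum S n h = X" unfolding h_def X_def
    using ssum_prefix[of n h' S rest] ssum_full[of h' S n] n by simp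
  have mn: "min n (n_pulls h S) = n" unfolding h_def using n by (simp add: n_pulls_append)
  have npos: "0 < real n" using n1 by simp
  have Rh: "R_hat h' S = (X + real n * mu S) / real n" by (simp add: R_hat_eq X_def n)
  have wq: "real n * (w n)^2 = 9 * L" by (rule w_sq[OF n1])
  have key: "cc \<le> Mg S n l h" if l: "l * X \<ge> 4/5 * real n * (w n)^2" and l2: "l^2 = 16/25 * (w n)^2" for l
  proof -
    have a1: "real n * l^2 = 16/25 * (real n * (w n)^2)" using l2 by simp
    have a: "real n * l^2 = 16/25 * (9 * L)" using a1 wq by simp
    have b0: "4/5 * real n * (w n)^2 = 4/5 * (real n * (w n)^2)" by simp
    have b: "l * X \<ge> 4/5 * (9 * L)" using l b0 wq by (simp add: mult.commute)
    have c: "l^2 * (5/8) * real n = 5/8 * (real n * l^2)" by simp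
    have "18 * L / 5 \<le> l * X - l^2 * (5/8) * real n"
      using a b c by linarith
    then show ?thesis by (simp add: cc_def Mg_def ss mn)
  qed
  have one: "1 \<le> (min cc (Mg S n (lam n) h) + min cc (Mg S n (- lam n) h)) / cc"
  proof (cases "R_hat h' S > mu S + w n")
    case True
    then have "X > real n * w n" using npos unfolding Rh by (simp add: field_simps)
    then have "lam n * X \<ge> lam n * (real n * w n)" unfolding lam_def using w_nonneg
      by (intro mult_left_mono) auto
    then have "cc \<le> Mg S n (lam n) h"
      by (intro key) (auto simp: lam_def power2_eq_square algebra_simps)
    then show ?thesis using cc_pos by (simp add: Mg_def field_simps)
  next
    case False
    then have "R_hat h' S < mu S - w n" using dev by auto
    then have "X < - (real n * w n)" using npos unfolding Rh by (simp add: field_simps)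
    then have "real n * w n \<le> - X" by simp
    moreover have "0 \<le> lam n" using w_nonneg by (simp add: lam_def)
    ultimately have "lam n * (real n * w n) \<le> lam n * (- X)" by (rule mult_left_mono)
    then have "- lam n * X \<ge> lam n * (real n * w n)" by simp
    then have "cc \<le> Mg S n (- lam n) h"
      by (intro key) (auto simp: lam_def power2_eq_square algebra_simps)
    then show ?thesis using cc_pos by (simp add: Mg_def field_simps)
  qed
  show ?thesis using one term_le_Bf[OF S, of n h] n1 nT by (simp add: h_def)
qed


lemma reach_fst: "reach [] h \<Longrightarrow> j < length h \<Longrightarrow> fst (h ! j) = pl (take j h)"
  by (auto simp: reach_def)

lemma all_pulled:
  assumes r: "reach [] h" and t: "T1 \<le> t" "t \<le> length h" and S: "S \<in> set enum"
  shows "1 \<le> n_pulls (take t h) S"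
proof -
  obtain j where j: "j < length enum" "enum ! j = S" using S by (auto simp: in_set_conv_nth)
  have jt: "j < t" using j(1) lenT1 t by simp
  have "fst (h ! j) = pl (take j h)" using reach_fst[OF r] jt t by simp
  also have "\<dots> = enum ! (j mod length enum)"
  proof -
    have "Suc (length (take j h)) \<le> T1" using jt t j(1) lenT1 by simp
    from ucb_phase1[OF this] show ?thesis using jt t by simp
  qed
  also have "\<dots> = S" using j by simp
  finally have f: "fst (h ! j) = S" .
  have "take t h ! j = h ! j" using jt by simp
  then have "h ! j \<in> set (filter (\<lambda>p. fst p = S) (take t h))"
    using jt t f by (auto simp: in_set_conv_nth intro: exI[of _ j])
  then have "0 < n_pulls (take t h) S" unfolding n_pulls_def by (rule length_pos_if_in_set)
  then show ?thesis by simp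
qed

lemma Pot_snoc:
  assumes S': "S' \<in> set enum"
  shows "Pot (h @ [(S', r)]) = Pot h + 4 * sqrt (9 * L) * (sqrt (real (n_pulls h S') + 1) - sqrt (real (n_pulls h S')))"
proof -
  define d where "d = 4 * sqrt (9 * L) * (sqrt (real (n_pulls h S') + 1) - sqrt (real (n_pulls h S')))"
  have e: "4 * sqrt (9 * L) * sqrt (real (n_pulls (h @ [(S', r)]) S)) = 4 * sqrt (9 * L) * sqrt (real (n_pulls h S)) + (if S' = S then d else 0)" for S
    by (cases "S' = S") (auto simp: n_pulls_snoc d_def algebra_simps)
  have "Pot (h @ [(S', r)]) = (\<Sum>S\<in>set enum. 4 * sqrt (9 * L) * sqrt (real (n_pulls h S)) + (if S' = S then d else 0))"
    unfolding Pot_def by (simp only: e)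
  also have "\<dots> = Pot h + d" using S' by (simp add: sum.distrib Pot_def)
  finally show ?thesis by (simp add: d_def)
qed

lemma w_le_inc:
  assumes n1: "1 \<le> n"
  shows "w n \<le> 4 * sqrt (9 * L) * (sqrt (real n + 1) - sqrt (real n))"
proof -
  define a where "a = sqrt (real n)"
  define b where "b = sqrt (real n + 1)"
  have a1: "1 \<le> a" using n1 by (simp add: a_def)
  have ab: "a \<le> b" by (simp add: a_def b_def)
  have sq: "b^2 - a^2 = 1" by (simp add: a_def b_def)
  have b2a: "b \<le> 2 * a"
  proof -
    have "real n + 1 \<le> 4 * real n" using n1 by simp
    then have "sqrt (real n + 1) \<le> sqrt (4 * real n)" by (rule real_sqrt_le_mono)
    also have "sqrt (4 * real n) = 2 * a" by (simp add: a_def real_sqrt_mult)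
    finally show ?thesis by (simp add: b_def)
  qed
  have "1 = (b - a) * (b + a)" using sq by (simp add: power2_eq_square algebra_simps)
  also have "\<dots> \<le> (b - a) * (3 * a)" using ab b2a by (intro mult_left_mono) auto
  finally have f3: "1 \<le> (b - a) * (3 * a)" .
  have "(b - a) * (3 * a) = 3 * ((b - a) * a)" "4 * (b - a) * a = 4 * ((b - a) * a)" by simp_all
  then have "1 \<le> 4 * (b - a) * a" using f3 by linarith
  then have inv: "1 / a \<le> 4 * (b - a)" using a1 by (simp add: divide_le_eq)
  have "w n = sqrt (9 * L) * (1 / a)" by (simp add: w_def a_def real_sqrt_divide)
  also have "\<dots> \<le> sqrt (9 * L) * (4 * (b - a))" by (rule mult_left_mono[OF inv]) (use L_pos in simp)
  also have "\<dots> = 4 * sqrt (9 * L) * (sqrt (real n + 1) - sqrt (real n))" by (simp add: a_def b_def)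
  finally show ?thesis .
qed

lemma mstar_props: "mstar \<in> mu ` set enum" "\<And>S. S \<in> set enum \<Longrightarrow> mu S \<le> mstar" "mstar \<le> 1"
proof -
  have f: "finite (mu ` set enum)" "mu ` set enum \<noteq> {}" using enum_ne by auto
  show "mstar \<in> mu ` set enum" unfolding mstar_def using f by (rule Max_in)
  show "\<And>S. S \<in> set enum \<Longrightarrow> mu S \<le> mstar" unfolding mstar_def using f by auto
  show "mstar \<le> 1" unfolding mstar_def using f mu_bounds by auto
qed

lemma step:
  assumes r: "reach [] h" and t: "t < length h" and lh: "length h = T"
  shows "mstar - mu (fst (h ! t)) \<le> (if t < T1 then 1 else 0) + 2 * (Pot (take (Suc t) h) - Pot (take t h)) + Bf h"
proof -
  define ht where "ht = take t h"
  define St where "St = fst (h ! t)"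
  have St_eq: "St = pl ht" using reach_fst[OF r t] by (simp add: St_def ht_def)
  have StU: "St \<in> set enum" using St_eq polU by simp
  have hsplit: "take (Suc t) h = ht @ [(St, snd (h ! t))]"
    by (simp add: ht_def St_def take_Suc_conv_app_nth[OF t])
  define inc where "inc = 4 * sqrt (9 * L) * (sqrt (real (n_pulls ht St) + 1) - sqrt (real (n_pulls ht St)))"
  have Pinc: "Pot (take (Suc t) h) - Pot ht = inc" unfolding hsplit inc_def using Pot_snoc[OF StU] by simp
  have inc0: "0 \<le> inc" unfolding inc_def using L_pos by (intro mult_nonneg_nonneg) auto
  have D1: "mstar - mu St \<le> 1" using mstar_props(3) mu_bounds[of St] by linarith
  have B0: "0 \<le> Bf h" by (rule Bf_nonneg)
  have hsp: "h = ht @ drop t h" by (simp add: ht_def)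
  show ?thesis
  proof (cases "t < T1")
    case True
    then show ?thesis using D1 B0 inc0 Pinc by (simp add: St_def ht_def)
  next
    case False
    obtain Ss where Ss: "Ss \<in> set enum" "mu Ss = mstar" using mstar_props(1) by auto
    have lht: "length ht = t" using t by (simp add: ht_def)
    have ph2: "\<forall>S'\<in>set enum. ucb_index (1 / (real T)^2) ht S' \<le> ucb_index (1 / (real T)^2) ht St"
      using ucb_phase2[OF enum_ne, of ht T1 "1 / (real T)^2"] False lht St_eq by simp
    define ns where "ns = n_pulls ht Ss"
    define nt where "nt = n_pulls ht St"
    have ns1: "1 \<le> ns" unfolding ns_def ht_def by (rule all_pulled[OF r]) (use False t Ss in auto)
    have nt1: "1 \<le> nt" unfolding nt_def ht_def by (rule all_pulled[OF r]) (use False t StU in auto)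
    have nsT: "ns \<le> T" using n_pulls_le[of ht Ss] lht t lh by (simp add: ns_def)
    have ntT: "nt \<le> T" using n_pulls_le[of ht St] lht t lh by (simp add: nt_def)
    show ?thesis
    proof (cases "R_hat ht Ss < mu Ss - w ns \<or> R_hat ht St > mu St + w nt")
      case True
      have "1 \<le> Bf h"
      proof (cases "R_hat ht Ss < mu Ss - w ns")
        case True
        then show ?thesis using dev_B[OF Ss(1) ns1 nsT ns_def, of "drop t h"] hsp by simp
      next
        case False
        then have "R_hat ht St > mu St + w nt" using \<open>R_hat ht Ss < mu Ss - w ns \<or> R_hat ht St > mu St + w nt\<close> by simp
        then show ?thesis using dev_B[OF StU nt1 ntT nt_def, of "drop t h"] hsp by simp
      qed
      then show ?thesis using D1 inc0 Pinc False by (simp add: St_def ht_def)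
    next
      case False
      have "mstar \<le> R_hat ht Ss + w ns" using False Ss(2) by simp
      also have "\<dots> = ucb_index (1 / (real T)^2) ht Ss" by (simp add: ui_eq ns_def)
      also have "\<dots> \<le> ucb_index (1 / (real T)^2) ht St" using ph2 Ss(1) by simp
      also have "\<dots> = R_hat ht St + w nt" by (simp add: ui_eq nt_def)
      also have "\<dots> \<le> mu St + 2 * w nt" using False by simp
      finally have "mstar - mu St \<le> 2 * w nt" by simp
      also have "\<dots> \<le> 2 * inc"
      proof -
        have "w nt \<le> inc" unfolding inc_def nt_def[symmetric] by (rule w_le_inc[OF nt1])
        then show ?thesis by simp
      qed
      finally show ?thesis using B0 Pinc \<open>\<not> t < T1\<close> by (simp add: St_def ht_def)
    qed
  qed
qed

lemma Pot_nil: "Pot [] = 0" by (simp add: Pot_def n_pulls_def)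

lemma sum_bound:
  assumes r: "reach [] h" and lh: "length h = T"
  shows "t \<le> T \<Longrightarrow> (\<Sum>j<t. mstar - mu (fst (h ! j))) \<le> real (min t T1) + 2 * Pot (take t h) + real t * Bf h"
proof (induction t)
  case 0 then show ?case by (simp add: Pot_nil)
next
  case (Suc t)
  have IH: "(\<Sum>j<t. mstar - mu (fst (h ! j))) \<le> real (min t T1) + 2 * Pot (take t h) + real t * Bf h"
    using Suc by simp
  have st: "mstar - mu (fst (h ! t)) \<le> (if t < T1 then 1 else 0) + 2 * (Pot (take (Suc t) h) - Pot (take t h)) + Bf h"
    by (rule step[OF r _ lh]) (use Suc.prems lh in simp)
  have mm: "real (min (Suc t) T1) = real (min t T1) + (if t < T1 then 1 else 0)" by auto
  show ?case using IH st mm by (simp add: algebra_simps)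
qed

end


context ucbloc begin

lemma Pot_bound:
  assumes lh: "length h = T"
  shows "Pot h \<le> 4 * sqrt (9 * L) * sqrt (real (card (set enum)) * real T)"
proof -
  have sumn: "(\<Sum>S\<in>set enum. real (n_pulls h S)) \<le> real T"
  proof -
    have "(\<Sum>S\<in>set enum. real (n_pulls h S)) = (\<Sum>S\<in>set enum. \<Sum>j<length h. if fst (h ! j) = S then 1 else (0::real))"
      by (simp add: n_pulls_sum)
    also have "\<dots> = (\<Sum>j<length h. \<Sum>S\<in>set enum. if fst (h ! j) = S then 1 else (0::real))"
      by (rule sum.swap)
    also have "\<dots> = (\<Sum>j<length h. if fst (h ! j) \<in> set enum then 1 else (0::real))"
      by (simp add: sum.delta)
    also have "\<dots> \<le> (\<Sum>j<length h. (1::real))" by (rule sum_mono) auto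
    finally show ?thesis using lh by simp
  qed
  have cs: "(\<Sum>S\<in>set enum. sqrt (real (n_pulls h S)))^2 \<le> (\<Sum>S\<in>set enum. (sqrt (real (n_pulls h S)))^2) * real (card (set enum))"
    by (rule sum_squared_le_sum_of_squares)
  also have "(\<Sum>S\<in>set enum. (sqrt (real (n_pulls h S)))^2) = (\<Sum>S\<in>set enum. real (n_pulls h S))" by simp
  finally have "(\<Sum>S\<in>set enum. sqrt (real (n_pulls h S)))^2 \<le> real T * real (card (set enum))"
    using sumn by (meson mult_right_mono of_nat_0_le_iff order_trans)
  then have "(\<Sum>S\<in>set enum. sqrt (real (n_pulls h S))) \<le> sqrt (real (card (set enum)) * real T)"
    by (intro real_le_rsqrt) (simp add: mult.commute)
  moreover have "Pot h = 4 * sqrt (9 * L) * (\<Sum>S\<in>set enum. sqrt (real (n_pulls h S)))"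
    by (simp add: Pot_def sum_distrib_left)
  ultimately show ?thesis using L_pos by (simp add: mult_left_mono)
qed

definition "Pb = 4 * sqrt (9 * L) * sqrt (real (card (set enum)) * real T)"

lemma pointwise:
  assumes r: "reach [] h" and lh: "length h = T"
  shows "real T * mstar + (-1) * Rs h \<le> (real T1 + 2 * Pb) + real T * Bf h"
proof -
  have "(\<Sum>j<T. mstar - mu (fst (h ! j))) \<le> real (min T T1) + 2 * Pot (take T h) + real T * Bf h"
    by (rule sum_bound[OF r lh]) simp
  moreover have "(\<Sum>j<T. mstar - mu (fst (h ! j))) = real T * mstar - Rs h"
    using lh by (simp add: Rs_def sum_subtractf)
  moreover have "min T T1 = T1" using T1T by simp
  moreover have "take T h = h" using lh by simp
  moreover have "Pot h \<le> Pb" unfolding Pb_def by (rule Pot_bound[OF lh])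
  ultimately show ?thesis by simp
qed

lemma Bf_alt: "Bf = (\<lambda>h. \<Sum>S\<in>set enum. \<Sum>n\<in>{1..T}. (1 / cc) * (min cc (Mg S n (lam n) h) + min cc (Mg S n (- lam n) h)))"
  by (simp add: Bf_def fun_eq_iff)

lemma good_inner: "good (\<lambda>h. (1 / cc) * (min cc (Mg S n (lam n) h) + min cc (Mg S n (- lam n) h)))"
  using cc_pos by (intro good_cmult good_add good_minMg) auto

lemma good_Bf: "good Bf"
  unfolding Bf_alt by (rule good_sum, simp, rule good_sum, simp, rule good_inner)

lemma E_Bf: "E T Bf [] \<le> real (card (set enum)) * real T * 2 / cc"
proof -
  have "E T Bf [] = (\<Sum>S\<in>set enum. E T (\<lambda>h. \<Sum>n\<in>{1..T}. (1 / cc) * (min cc (Mg S n (lam n) h) + min cc (Mg S n (- lam n) h))) [])"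
    unfolding Bf_alt by (rule E_sum, simp, rule good_sum, simp, rule good_inner)
  also have "\<dots> = (\<Sum>S\<in>set enum. \<Sum>n\<in>{1..T}. E T (\<lambda>h. (1 / cc) * (min cc (Mg S n (lam n) h) + min cc (Mg S n (- lam n) h))) [])"
    by (rule sum.cong[OF refl], rule E_sum, simp, rule good_inner)
  also have "\<dots> \<le> (\<Sum>S\<in>set enum. \<Sum>n\<in>{1..T}. 2 / cc)"
  proof (intro sum_mono)
    fix S n assume S: "S \<in> set enum"
    have g1: "good (\<lambda>h. min cc (Mg S n (lam n) h))" "good (\<lambda>h. min cc (Mg S n (- lam n) h))"
      using cc_pos by (auto intro: good_minMg)
    have "E T (\<lambda>h. (1 / cc) * (min cc (Mg S n (lam n) h) + min cc (Mg S n (- lam n) h))) []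
        = (1 / cc) * (E T (\<lambda>h. min cc (Mg S n (lam n) h)) [] + E T (\<lambda>h. min cc (Mg S n (- lam n) h)) [])"
      by (simp only: E_cmult E_add[OF g1])
    also have "\<dots> \<le> (1 / cc) * (1 + 1)"
      using supermart[OF S, of cc T n "lam n" "[]"] supermart[OF S, of cc T n "- lam n" "[]"] cc_pos
      by (intro mult_left_mono add_mono) (auto simp: Mg_nil)
    finally show "E T (\<lambda>h. (1 / cc) * (min cc (Mg S n (lam n) h) + min cc (Mg S n (- lam n) h))) [] \<le> 2 / cc"
      by simp
  qed
  also have "\<dots> = real (card (set enum)) * real T * 2 / cc" by simp
  finally show ?thesis .
qed

lemma regret_main:
  "real T * mstar - ER T [] \<le> (real T1 + 2 * Pb) + real T * (real (card (set enum)) * real T * 2 / cc)"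
proof -
  have gl: "good (\<lambda>h. real T * mstar + (-1) * Rs h)" by (intro good_add good_const good_cmult good_Rs)
  have gr: "good (\<lambda>h. (real T1 + 2 * Pb) + real T * Bf h)" by (intro good_add good_const good_cmult good_Bf)
  have "E T (\<lambda>h. real T * mstar + (-1) * Rs h) [] = E T (\<lambda>h. real T * mstar) [] + E T (\<lambda>h. (-1) * Rs h) []"
    by (rule E_add[OF good_const good_cmult[OF good_Rs]])
  also have "\<dots> = real T * mstar - ER T []"
    by (simp only: E_const E_cmult regret_E)
  finally have "real T * mstar - ER T [] = E T (\<lambda>h. real T * mstar + (-1) * Rs h) []" by simp
  also have "\<dots> \<le> E T (\<lambda>h. (real T1 + 2 * Pb) + real T * Bf h) []"
    by (rule E_mono[OF gl gr]) (rule pointwise, auto)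
  also have "\<dots> = E T (\<lambda>h. real T1 + 2 * Pb) [] + E T (\<lambda>h. real T * Bf h) []"
    by (rule E_add[OF good_const good_cmult[OF good_Bf]])
  also have "\<dots> = (real T1 + 2 * Pb) + real T * E T Bf []"
    by (simp only: E_const E_cmult)
  also have "\<dots> \<le> (real T1 + 2 * Pb) + real T * (real (card (set enum)) * real T * 2 / cc)"
    using E_Bf by (intro add_left_mono mult_left_mono) auto
  finally show ?thesis .
qed

lemma final_bound:
  "real T * mstar - ER T [] \<le> 48 * (sqrt (real (card (set enum)) * real T) + real T1) * (1 + ln (real T))"
proof -
  define u where "u = real (card (set enum))"
  have uT: "u \<le> real T" using distinct_card[OF dist] lenT1 T1T by (simp add: u_def)
  have u0: "0 \<le> u" by (simp add: u_def)
  have T2': "2 \<le> real T" using T2 by simp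
  have lnT: "0 < ln (real T)" using T2' by simp
  have Ldef: "L = 2 * ln (real T)" using T2' by (simp add: L_def ln_realpow)
  have cc_ge: "real T ^ 3 \<le> cc"
  proof -
    have "exp (real 3 * ln (real T)) = exp (ln (real T)) ^ 3" by (rule exp_of_nat_mult)
    then have "real T ^ 3 = exp (3 * ln (real T))" using T2' by simp
    also have "\<dots> \<le> exp (18 * L / 5)" using lnT by (simp add: Ldef)
    finally show ?thesis by (simp add: cc_def)
  qed
  have t3: "real T * (u * real T * 2 / cc) \<le> 2"
  proof -
    have "real T * (u * real T * 2) \<le> real T * (real T * real T * 2)"
      using uT u0 T2' by (intro mult_left_mono) (auto intro: mult_right_mono)
    also have "\<dots> = 2 * real T ^ 3" by (simp add: power3_eq_cube)
    also have "\<dots> \<le> 2 * cc" using cc_ge by simp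
    finally have "real T * (u * real T * 2) \<le> 2 * cc" .
    then show ?thesis using cc_pos by (simp add: divide_le_eq)
  qed
  have sL: "sqrt L \<le> 1 + ln (real T)"
  proof -
    have "L \<le> (1 + ln (real T))^2" using lnT by (simp add: Ldef power2_eq_square algebra_simps)
    then show ?thesis using lnT by (simp add: real_le_lsqrt real_sqrt_le_iff)
  qed
  have Pb_le: "Pb \<le> 12 * (1 + ln (real T)) * sqrt (u * real T)"
  proof -
    have "Pb = 12 * sqrt L * sqrt (u * real T)" by (simp add: Pb_def u_def real_sqrt_mult)
    also have "\<dots> \<le> 12 * (1 + ln (real T)) * sqrt (u * real T)"
      by (intro mult_right_mono) (use sL u0 in \<open>auto intro: mult_nonneg_nonneg\<close>)
    finally show ?thesis .
  qed
  have T1_2: "2 \<le> real T1" using len2 lenT1 by simp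
  have s0: "0 \<le> sqrt (u * real T)" using u0 by simp
  have "real T * mstar - ER T [] \<le> (real T1 + 2 * Pb) + 2" using regret_main t3 by (simp add: u_def)
  also have "\<dots> \<le> real T1 * (1 + ln (real T)) + 24 * (1 + ln (real T)) * sqrt (u * real T) + real T1 * (1 + ln (real T))"
  proof -
    have "0 \<le> real T1 * ln (real T)" using lnT T1_2 by simp
    then have A: "real T1 \<le> real T1 * (1 + ln (real T))" by (simp add: algebra_simps)
    show ?thesis using Pb_le A T1_2 by linarith
  qed
  also have "\<dots> \<le> 48 * (sqrt (u * real T) + real T1) * (1 + ln (real T))"
    using lnT s0 T1_2 by (simp add: algebra_simps)
  finally show ?thesis by (simp add: u_def)
qed

end


lemma mean_mu:
  fixes P :: "(nat \<Rightarrow> nat) set"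
  shows "(\<Sum>i<N. (\<Sum>A\<in>P. Y i A) / c) / real N = (\<Sum>A\<in>P. (\<Sum>i<N. Y i A) / real N) / (c::real)"
proof -
  have "(\<Sum>i<N. (\<Sum>A\<in>P. Y i A) / c) = (\<Sum>i<N. \<Sum>A\<in>P. Y i A) / c" by (simp add: sum_divide_distrib)
  also have "(\<Sum>i<N. \<Sum>A\<in>P. Y i A) = (\<Sum>A\<in>P. \<Sum>i<N. Y i A)" by (rule sum.swap)
  also have "(\<Sum>A\<in>P. (\<Sum>i<N. Y i A) / real N) = (\<Sum>A\<in>P. \<Sum>i<N. Y i A) / real N" by (simp add: sum_divide_distrib)
  ultimately show ?thesis by simp
qed

theorem theorem4:
  "\<exists>C::real. C > 0 \<and> (\<exists>k::nat.
    \<forall>(N::nat) (K::nat) (H::nat \<Rightarrow> nat \<Rightarrow> real) (Smap::nat \<Rightarrow> (nat \<Rightarrow> nat) \<Rightarrow> (nat \<Rightarrow> nat \<Rightarrow> real) \<Rightarrow> 'e)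
      (Cl::nat set set) (Y::nat \<Rightarrow> (nat \<Rightarrow> nat) \<Rightarrow> real) (noise::real measure)
      (enum::(nat \<Rightarrow> 'e) list) (T::nat) (T1::nat).
      1 \<le> N \<longrightarrow> 1 \<le> K \<longrightarrow>
      partition_on {..<N} Cl \<longrightarrow>
      (\<forall>i<N. \<forall>A\<in>superarms N K. 0 \<le> Y i A \<and> Y i A \<le> 1) \<longrightarrow>
      subgaussian_noise noise \<longrightarrow>
      distinct enum \<longrightarrow> set enum = UE N K Smap H Cl \<longrightarrow>
      2 \<le> card (UE N K Smap H Cl) \<longrightarrow> card (UE N K Smap H Cl) \<le> T \<longrightarrow>
      card (UE N K Smap H Cl) \<le> T1 \<longrightarrow> T1 \<le> T \<longrightarrow>
      regret N K Smap H Cl Y noise (ucb_tsn enum T1 (1 / (real T)\<^sup>2)) T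
        \<le> C * (sqrt (real (card (UE N K Smap H Cl)) * real T) + real T1) * (1 + ln (real T)) ^ k)"
proof (rule exI[of _ "48::real"], rule conjI, simp, intro exI[of _ "1::nat"] allI impI)
  fix N K :: nat and H :: "nat \<Rightarrow> nat \<Rightarrow> real" and Smap :: "nat \<Rightarrow> (nat \<Rightarrow> nat) \<Rightarrow> (nat \<Rightarrow> nat \<Rightarrow> real) \<Rightarrow> 'e"
    and Cl :: "nat set set" and Y :: "nat \<Rightarrow> (nat \<Rightarrow> nat) \<Rightarrow> real" and noise :: "real measure"
    and enum :: "(nat \<Rightarrow> 'e) list" and T T1 :: nat
  assume N1: "1 \<le> N" and K1: "1 \<le> K" and part: "partition_on {..<N} Cl"
    and Yb: "\<forall>i<N. \<forall>A\<in>superarms N K. 0 \<le> Y i A \<and> Y i A \<le> 1"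
    and sg: "subgaussian_noise noise" and dist: "distinct enum" and se: "set enum = UE N K Smap H Cl"
    and c2: "2 \<le> card (UE N K Smap H Cl)" and cT: "card (UE N K Smap H Cl) \<le> T"
    and cT1: "card (UE N K Smap H Cl) \<le> T1" and T1T: "T1 \<le> T"
  have len: "card (UE N K Smap H Cl) = length enum" using distinct_card[OF dist] se by simp
  have ne: "enum \<noteq> []" using c2 len by auto
  have pre_sub: "preimg N K Smap H S \<subseteq> superarms N K" for S by (auto simp: preimg_def)
  have fin_sa: "finite (superarms N K)" by (simp add: superarms_def finite_PiE)
  interpret u: ucbloc N Y noise "preimg N K Smap H" enum T1 T
  proof unfold_locales
    show "1 \<le> N" by (rule N1)
    show "subgaussian_noise noise" by (rule sg)
    show "finite (set enum)" by simp
    show "finite (preimg N K Smap H S)" for S using pre_sub fin_sa by (rule finite_subset)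
    show "preimg N K Smap H S \<noteq> {}" if "S \<in> set enum" for S
    proof -
      have "S \<in> UO N K Smap H" using that se by (simp add: UE_def)
      then obtain A where "A \<in> superarms N K" "expo_arm N Smap H A = S" by (auto simp: UO_def)
      then show ?thesis by (auto simp: preimg_def)
    qed
    show "0 \<le> Y i A \<and> Y i A \<le> 1" if "S \<in> set enum" "A \<in> preimg N K Smap H S" "i < N" for S A i
      using Yb that pre_sub by blast
    show "ucb_tsn enum T1 (1 / (real T)\<^sup>2) h \<in> set enum" for h by (rule ucb_in[OF ne])
    show "{v \<in> space Om. ucb_tsn enum T1 (1 / (real T)\<^sup>2) (hist fs v) = S} \<in> sets Om" for fs S
      by (rule polm_ucb)
    show "distinct enum" by (rule dist)
    show "2 \<le> length enum" using c2 len by simp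
    show "length enum \<le> T1" using cT1 len by simp
    show "T1 \<le> T" by (rule T1T)
  qed
  have mm: "Max (mean_exposure_reward N K Smap H Y ` UE N K Smap H Cl) = u.mstar"
  proof -
    have "mean_exposure_reward N K Smap H Y S = u.mu S" if "S \<in> set enum" for S
      using that by (simp add: mean_exposure_reward_def Ytil_def u.mu_def mean_mu)
    then have "mean_exposure_reward N K Smap H Y ` set enum = u.mu ` set enum" by (rule image_cong[OF refl])
    then show ?thesis by (simp add: u.mstar_def se)
  qed
  show "regret N K Smap H Cl Y noise (ucb_tsn enum T1 (1 / (real T)\<^sup>2)) T
        \<le> 48 * (sqrt (real (card (UE N K Smap H Cl)) * real T) + real T1) * (1 + ln (real T)) ^ 1"
    using u.final_bound by (simp add: regret_def mm se)
qed



end
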